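(* Let $a>0$, $g>0$, $l_{\mathrm{c}}>0$, $c_{\infty}>0$ and $c_{\mathrm{s}}\ge 0$ be constants. Consider pairs $(l_{\infty},c)$ with $l_{\infty}>0$ and $c$ continuously differentiable on $[0,l_{\infty})$ with left limit $c^-:=\lim_{x\nearrow l_{\infty}}c(x)$, satisfying \[ -a c'(x)-g c(x)=0\ (0<x<l_{\infty}),\qquad a c^-=g l_{\mathrm{c}} c_{\infty},\qquad c(0)=c_{\mathrm{s}} \] (steady-state solutions). Such a pair exists if and only if $c_{\mathrm{s}}>c_{\infty} g l_{\mathrm{c}}/a$, and in that case it is unique and given by \[ c(x)=c_{\mathrm{s}}\mathrm{e}^{-gx/a},\qquad l_{\infty}=\frac{a}{g}\log\frac{a c_{\mathrm{s}}}{g l_{\mathrm{c}} c_{\infty}}. \]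
   Context: This is the steady-state problem of a one-dimensional axonal growth model with no diffusion ($D=0$), in which the tubulin concentration along the axon is not required to be continuous at the axon tip $x=l_{\infty}$ (the growth cone concentration is $c_{\infty}$, while $c^-$ is the concentration just inside the axon). Here $a$ is the active transport velocity, $g$ the degradation rate, $l_{\mathrm{c}}$ the characteristic growth-cone length, $c_{\mathrm{s}}$ the soma concentration, and $l_{\infty}$ the axon length. *)

theory Defs
  imports "HOL-Analysis.Analysis"
begin

definition steady_state ::
  "real \<Rightarrow> real \<Rightarrow> real \<Rightarrow> real \<Rightarrow> real \<Rightarrow> real \<Rightarrow> (real \<Rightarrow> real) \<Rightarrow> bool" where
  "steady_state a g lc cinf cs l c \<longleftrightarrow>
     l > 0 \<and>
     (\<exists>c'. continuous_on {0..<l} c' \<and>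
           (\<forall>x\<in>{0..<l}. (c has_real_derivative c' x) (at x within {0..<l})) \<and>
           (\<forall>x\<in>{0<..<l}. - a * c' x - g * c x = 0)) \<and>
     (\<exists>cm. (c \<longlongrightarrow> cm) (at_left l) \<and> a * cm = g * lc * cinf) \<and>
     c 0 = cs"

end

theory Submission
  imports Defs
begin

lemma uniq:
  fixes a g l :: real and c c' :: "real \<Rightarrow> real"
  assumes a: "a > 0"
    and d: "\<forall>x\<in>{0..<l}. (c has_real_derivative c' x) (at x within {0..<l})"
    and ode: "\<forall>x\<in>{0<..<l}. - a * c' x - g * c x = 0"
    and x: "x \<in> {0..<l}"
  shows "c x = c 0 * exp (- g * x / a)"
proof (cases "x = 0")
  case True then show ?thesis by simp
next
  case False
  with x have x0: "0 < x" "x < l" by auto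
  define h where "h t = c t * exp (g * t / a)" for t
  have cc: "continuous_on {0..<l} c"
    unfolding continuous_on_eq_continuous_within
    using d by (metis has_derivative_continuous has_field_derivative_def)
  have "continuous_on {0..x} c"
    by (rule continuous_on_subset[OF cc]) (use x0 in auto)
  hence hc: "continuous_on {0..x} h" unfolding h_def
    by (intro continuous_intros) (use a in auto)
  have hd: "(h has_real_derivative 0) (at t)" if "0 < t" "t < x" for t
  proof -
    have ti: "t \<in> interior {0..<l}" using that x0 by auto
    have "(c has_real_derivative c' t) (at t)"
      using d that x0 at_within_interior[OF ti] by (metis atLeastLessThan_iff less_trans order_less_imp_le)
    hence "(h has_real_derivative (c' t * exp (g * t / a) + c t * (exp (g * t / a) * (g / a)))) (at t)"
      unfolding h_def
      using a by (auto intro!: derivative_eq_intros)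
    moreover have "c' t = - g / a * c t" using ode that x0 a
      by (auto simp: field_simps) (smt (verit, best) greaterThanLessThan_iff mult.commute)
    ultimately show ?thesis using a by (simp add: algebra_simps)
  qed
  have "h x = h 0" by (rule DERIV_isconst_end[OF x0(1) hc hd])
  thus ?thesis unfolding h_def by (simp add: exp_minus field_simps exp_add[symmetric])
qed

theorem theorem4:
  fixes a g lc cinf cs :: real
  assumes "a > 0" "g > 0" "lc > 0" "cinf > 0" "cs \<ge> 0"
  shows "((\<exists>l c. steady_state a g lc cinf cs l c) \<longleftrightarrow> cs > cinf * g * lc / a) \<and>
         (cs > cinf * g * lc / a \<longrightarrow>
            (\<forall>l c. steady_state a g lc cinf cs l c \<longleftrightarrow>
               (l = a / g * ln (a * cs / (g * lc * cinf)) \<and>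
                (\<forall>x\<in>{0..<l}. c x = cs * exp (- g * x / a)))))"
proof -
  note A = assms
  define L where "L = a / g * ln (a * cs / (g * lc * cinf))"
  have fwd: "l = L \<and> (\<forall>x\<in>{0..<l}. c x = cs * exp (- g * x / a)) \<and> cs > cinf * g * lc / a"
    if ss: "steady_state a g lc cinf cs l c" for l c
  proof -
    from ss have l0: "l > 0" and c0: "c 0 = cs" unfolding steady_state_def by auto
    from ss obtain c' where d: "\<forall>x\<in>{0..<l}. (c has_real_derivative c' x) (at x within {0..<l})"
      and ode: "\<forall>x\<in>{0<..<l}. - a * c' x - g * c x = 0" unfolding steady_state_def by blast
    from ss obtain cm where lim: "(c \<longlongrightarrow> cm) (at_left l)" and fl: "a * cm = g * lc * cinf"
      unfolding steady_state_def by blast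
    have cx: "\<forall>x\<in>{0..<l}. c x = cs * exp (- g * x / a)"
      using uniq[OF A(1) d ode] c0 by auto
    have ev: "\<forall>\<^sub>F x in at_left l. c x = cs * exp (- g * x / a)"
      using eventually_at_left_real[OF l0] by eventually_elim (use cx in auto)
    have l1: "((\<lambda>x. cs * exp (- g * x / a)) \<longlongrightarrow> cm) (at_left l)"
      using lim tendsto_cong[OF ev] by simp
    have l2: "((\<lambda>x. cs * exp (- g * x / a)) \<longlongrightarrow> cs * exp (- g * l / a)) (at_left l)"
      by (intro tendsto_intros) (use A in auto)
    have cm: "cm = cs * exp (- g * l / a)"
      using tendsto_unique[OF trivial_limit_at_left_real l1 l2] by simp
    have e: "a * cs = g * lc * cinf * exp (g * l / a)"
      using fl cm A by (simp add: exp_minus field_simps)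
    have "exp (g * l / a) > 1" using A l0 by simp
    hence gt: "cs > cinf * g * lc / a" using e A
      by (simp add: field_simps)
    have "a * cs / (g * lc * cinf) = exp (g * l / a)" using e A by (simp add: field_simps)
    hence "L = l" unfolding L_def using A by simp
    thus ?thesis using cx gt by simp
  qed
  have bwd: "steady_state a g lc cinf cs L c"
    if gt: "cs > cinf * g * lc / a" and cx: "\<forall>x\<in>{0..<L}. c x = cs * exp (- g * x / a)" for c
  proof -
    have r: "a * cs / (g * lc * cinf) > 1" using gt A by (simp add: field_simps)
    hence "ln (a * cs / (g * lc * cinf)) > 0" by simp
    hence L0: "L > 0" unfolding L_def using A by simp
    have eL: "exp (g * L / a) = a * cs / (g * lc * cinf)" unfolding L_def using A r by (simp add: less_trans[OF zero_less_one r])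
    define c' where "c' x = - g / a * (cs * exp (- g * x / a))" for x
    have D: "(c has_real_derivative c' x) (at x within {0..<L})" if x: "x \<in> {0..<L}" for x
    proof -
      have "((\<lambda>x. cs * exp (- g * x / a)) has_real_derivative c' x) (at x within {0..<L})"
        unfolding c'_def using A by (auto intro!: derivative_eq_intros)
      thus ?thesis
        by (rule has_field_derivative_transform_within[of _ _ _ _ 1]) (use x cx in auto)
    qed
    have ode: "\<forall>x\<in>{0<..<L}. - a * c' x - g * c x = 0"
      using cx A unfolding c'_def by auto
    have ev: "\<forall>\<^sub>F x in at_left L. cs * exp (- g * x / a) = c x"
      using eventually_at_left_real[OF L0] by eventually_elim (use cx in auto)
    have l2: "((\<lambda>x. cs * exp (- g * x / a)) \<longlongrightarrow> cs * exp (- g * L / a)) (at_left L)"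
      by (intro tendsto_intros) (use A in auto)
    hence lim: "(c \<longlongrightarrow> cs * exp (- g * L / a)) (at_left L)" using tendsto_cong[OF ev] by simp
    have fl: "a * (cs * exp (- g * L / a)) = g * lc * cinf"
      using eL A r by (simp add: exp_minus field_simps)
    have cc: "continuous_on {0..<L} c'" unfolding c'_def by (intro continuous_intros) (use A in auto)
    have "c 0 = cs" using cx L0 by auto
    thus ?thesis unfolding steady_state_def using L0 D ode lim fl cc
      by (intro conjI exI[of _ c'] exI[of _ "cs * exp (- g * L / a)"]) auto
  qed
  have c1: "(\<exists>l c. steady_state a g lc cinf cs l c) \<longleftrightarrow> cs > cinf * g * lc / a"
    using fwd bwd[of "\<lambda>x. cs * exp (- g * x / a)"] by blast
  have c2: "steady_state a g lc cinf cs l c \<longleftrightarrow>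
               (l = a / g * ln (a * cs / (g * lc * cinf)) \<and>
                (\<forall>x\<in>{0..<l}. c x = cs * exp (- g * x / a)))"
    if gt: "cs > cinf * g * lc / a" for l c
    using fwd bwd[OF gt, of c] unfolding L_def by blast
  show ?thesis using c1 c2 by blast
qed

end
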